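(* Under the standing assumptions below: 1. If there exists $d<2$ such that $(n^da_n)_{n\in\mathbb{N}}$ is eventually monotonically increasing, then, regardless of $b\in X$ (with all $b_n\ne 0$), there is no $\lambda\in c_H$ for which $k(\lambda)$ is well defined and belongs to $\ell^\infty$. 2. If there exists $d>2$ such that $(n^da_n)_{n\in\mathbb{N}}$ is eventually monotonically decreasing and $\ln(a_n/|b_n|)=o(n)$ as $n\to\infty$, then for every $\lambda\in c_H$ with $\lambda_n/a_n\to0$, we have $k(\lambda)\in\ell^1$.
   Context: $X$ is one of $\ell^p$ ($1\le p\le\infty$), $c$, $c_0$. Standing assumptions: $a=(a_n)$ strictly decreasing positive reals with $a_n\to 0$; $b=(b_n)\in X$ with $b_n\neq0$ for all $n$. $H:=\{z\in\mathbb{C}\mid\operatorname{re} z\le0\}$, $c_H:=\{(\lambda_n)\in c_0\mid\lambda_n\in H\ \forall n\}$. For $\lambda\in c_H$, $$k_n(\lambda):=-\frac{a_n-\lambda_n}{b_n}\prod_{m\ge1,\,m\neq n}\frac{1-\lambda_m/a_n}{1-a_m/a_n}.$$ A real sequence $(x_n)$ is eventually monotonically increasing (decreasing) if it is monotonically increasing (decreasing) for all $n\ge N$ for some $N$. *)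

theory Defs
  imports "HOL-Analysis.Analysis" "HOL-Library.Landau_Symbols"
begin

text \<open>Convention: the paper's sequences (x_n) with n = 1,2,... are represented by
  functions x :: nat => _ with x i standing for x_(i+1); the paper's index n is
  therefore real (Suc i).\<close>

datatype seq_space = Lp real | Linf | Conv | Conv0

definition valid_space :: "seq_space \<Rightarrow> bool" where
  "valid_space X = (case X of Lp p \<Rightarrow> 1 \<le> p | _ \<Rightarrow> True)"

definition in_space :: "seq_space \<Rightarrow> (nat \<Rightarrow> complex) \<Rightarrow> bool" where
  "in_space X x = (case X of
      Lp p \<Rightarrow> summable (\<lambda>n. norm (x n) powr p)
    | Linf \<Rightarrow> bounded (range x)
    | Conv \<Rightarrow> convergent x
    | Conv0 \<Rightarrow> x \<longlonglongrightarrow> 0)"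

definition c_H :: "(nat \<Rightarrow> complex) set" where
  "c_H = {l. l \<longlonglongrightarrow> 0 \<and> (\<forall>n. Re (l n) \<le> 0)}"

text \<open>Factor of the infinite product defining k_n; the excluded index m = n gets factor 1.\<close>
definition k_factor :: "(nat \<Rightarrow> real) \<Rightarrow> (nat \<Rightarrow> complex) \<Rightarrow> nat \<Rightarrow> nat \<Rightarrow> complex" where
  "k_factor a l n m = (if m = n then 1
      else (1 - l m / complex_of_real (a n)) / (1 - complex_of_real (a m / a n)))"

definition k_well_defined :: "(nat \<Rightarrow> real) \<Rightarrow> (nat \<Rightarrow> complex) \<Rightarrow> bool" where
  "k_well_defined a l = (\<forall>n. convergent_prod (k_factor a l n))"

definition k :: "(nat \<Rightarrow> real) \<Rightarrow> (nat \<Rightarrow> complex) \<Rightarrow> (nat \<Rightarrow> complex) \<Rightarrow> nat \<Rightarrow> complex" where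
  "k a b l n = - ((complex_of_real (a n) - l n) / b n) * (\<Prod>m. k_factor a l n m)"

definition eventually_incr :: "(nat \<Rightarrow> real) \<Rightarrow> bool" where
  "eventually_incr x = (\<exists>N. \<forall>m n. N \<le> m \<longrightarrow> m \<le> n \<longrightarrow> x m \<le> x n)"

definition eventually_decr :: "(nat \<Rightarrow> real) \<Rightarrow> bool" where
  "eventually_decr x = (\<exists>N. \<forall>m n. N \<le> m \<longrightarrow> m \<le> n \<longrightarrow> x n \<le> x m)"

end

theory Submission
  imports Defs "HOL-Real_Asymp.Real_Asymp"
begin




lemma prod_absdiff:
  assumes "n < M"
  shows "(\<Prod>m\<in>{..<M}-{n}. \<bar>real m - real n\<bar>) = fact n * fact (M - Suc n)"
  using assms
proof (induction M)
  case 0 then show ?case by simp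
next
  case (Suc M)
  show ?case
  proof (cases "M = n")
    case True
    have "{..<Suc M} - {n} = {0..<n}" using True by auto
    then have "(\<Prod>m\<in>{..<Suc M}-{n}. \<bar>real m - real n\<bar>) = (\<Prod>m=0..<n. real (n - m))"
      by (intro prod.cong) auto
    also have "\<dots> = fact n" by (simp add: fact_prod_rev)
    finally show ?thesis using True by simp
  next
    case False
    then have nM: "n < M" using Suc by simp
    have "{..<Suc M} - {n} = insert M ({..<M} - {n})" using nM by auto
    then have "(\<Prod>m\<in>{..<Suc M}-{n}. \<bar>real m - real n\<bar>) = \<bar>real M - real n\<bar> * (\<Prod>m\<in>{..<M}-{n}. \<bar>real m - real n\<bar>)"
      by simp
    also have "\<dots> = real (M - n) * (fact n * fact (M - Suc n))" using Suc nM by (simp add: of_nat_diff)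
    also have "\<dots> = fact n * fact (Suc M - Suc n)"
    proof -
      have "Suc M - Suc n = Suc (M - Suc n)" using nM by simp
      then show ?thesis using nM by (simp add: of_nat_diff)
    qed
    finally show ?thesis .
  qed
qed

lemma prod_sucm:
  assumes "n < M"
  shows "(\<Prod>m\<in>{..<M}-{n}. real (Suc m)) = fact M / real (Suc n)"
proof -
  have "(\<Prod>m\<in>{..<M}. real (Suc m)) = real (Suc n) * (\<Prod>m\<in>{..<M}-{n}. real (Suc m))"
    using assms by (subst prod.remove[of _ n]) auto
  moreover have "(\<Prod>m\<in>{..<M}. real (Suc m)) = fact M"
    by (simp add: fact_prod_Suc lessThan_atLeast0)
  ultimately show ?thesis by (simp add: field_simps)
qed

lemma prod_plus:
  "(\<Prod>m<M. real (m + n + 2)) = fact (M + n + 1) / fact (n + 1)"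
proof (induction M)
  case 0 then show ?case by simp
next
  case (Suc M)
  then show ?case by (simp add: fact_Suc field_simps)
qed

lemma prod_plus':
  assumes "n < M"
  shows "(\<Prod>m\<in>{..<M}-{n}. real (m + n + 2)) = fact (M + n + 1) / (fact (n + 1) * (2 * real (Suc n)))"
proof -
  have "(\<Prod>m\<in>{..<M}. real (m + n + 2)) = real (n + n + 2) * (\<Prod>m\<in>{..<M}-{n}. real (m + n + 2))"
    using assms by (subst prod.remove[of _ n]) auto
  moreover have "(\<Prod>m\<in>{..<M}. real (m + n + 2)) = fact (M + n + 1) / fact (n + 1)"
    using prod_plus[where M=M and n=n] by simp
  ultimately have "real (n + n + 2) * (\<Prod>m\<in>{..<M}-{n}. real (m + n + 2)) = fact (M + n + 1) / fact (n + 1)"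
    by simp
  moreover have "real (n + n + 2) = 2 * real (Suc n)" by simp
  ultimately show ?thesis
    by (simp add: field_simps del: fact_Suc of_nat_Suc of_nat_add)
qed

definition hh :: "nat \<Rightarrow> nat \<Rightarrow> real" where
  "hh n m = \<bar>1 - (real (Suc n) / real (Suc m))^2\<bar>"

lemma hh_eq: "hh n m = \<bar>real m - real n\<bar> * real (m + n + 2) / real (Suc m) ^ 2"
proof -
  have "(real (Suc m)^2 - real (Suc n)^2) / real (Suc m) ^ 2 = 1 - (real (Suc n) / real (Suc m))^2"
    by (simp only: diff_divide_distrib power_divide) simp
  then have "1 - (real (Suc n) / real (Suc m))^2 = (real (Suc m)^2 - real (Suc n)^2) / real (Suc m) ^ 2" ..
  also have "real (Suc m)^2 - real (Suc n)^2 = (real m - real n) * real (m + n + 2)"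
    by (simp add: power2_eq_square algebra_simps)
  finally have "1 - (real (Suc n) / real (Suc m))^2 = (real m - real n) * real (m + n + 2) / real (Suc m) ^ 2" .
  then show ?thesis unfolding hh_def by (simp add: abs_mult)
qed

lemma prod_hh:
  assumes "n < M"
  shows "(\<Prod>m\<in>{..<M}-{n}. hh n m) = fact (M - Suc n) * fact (M + n + 1) / (2 * fact M ^ 2)"
proof -
  have "(\<Prod>m\<in>{..<M}-{n}. hh n m) = (\<Prod>m\<in>{..<M}-{n}. \<bar>real m - real n\<bar>) * (\<Prod>m\<in>{..<M}-{n}. real (m + n + 2))
      / (\<Prod>m\<in>{..<M}-{n}. real (Suc m)) ^ 2"
    by (simp add: hh_eq prod.distrib prod_dividef power_divide prod_power_distrib)
  also have "\<dots> = fact (M - Suc n) * fact (M + n + 1) / (2 * fact M ^ 2)"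
    unfolding prod_absdiff[OF assms] prod_plus'[OF assms] prod_sucm[OF assms]
  proof -
    have e: "fact (n+1) = real (Suc n) * fact n" by simp
    have "fact n > (0::real)" "fact M > (0::real)" by auto
    then show "fact n * fact (M - Suc n) * (fact (M + n + 1) / (fact (n + 1) * (2 * real (Suc n)))) / (fact M / real (Suc n))\<^sup>2 =
    fact (M - Suc n) * fact (M + n + 1) / (2 * (fact M)\<^sup>2)" unfolding e
      by (simp only: power2_eq_square) (simp add: field_simps del: fact_Suc of_nat_Suc)
  qed
  finally show ?thesis .
qed



lemma fact_add_prod: "fact (m + j) = (fact m :: real) * (\<Prod>i<j. real (m + 1 + i))"
  by (induction j) (simp_all add: algebra_simps)

lemma G_ratio:
  assumes "j \<le> M"
  shows "fact (M - j) * fact (M + j) / (fact M)^2 = (\<Prod>i<j. real (M + 1 + i) / real (M - j + 1 + i))"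
proof -
  have e1: "fact M = (fact (M - j) :: real) * (\<Prod>i<j. real (M - j + 1 + i))"
    using fact_add_prod[of "M - j" j] assms by simp
  have e2: "fact (M + j) = (fact M :: real) * (\<Prod>i<j. real (M + 1 + i))"
    by (rule fact_add_prod)
  have p: "(\<Prod>i<j. real (M - j + 1 + i)) > 0" by (intro prod_pos) auto
  have "fact (M - j) * fact (M + j) / (fact M)^2 = (\<Prod>i<j. real (M + 1 + i)) / (\<Prod>i<j. real (M - j + 1 + i))"
    unfolding e2 power2_eq_square using p
    by (subst (2) e1) (simp add: field_simps)
  also have "\<dots> = (\<Prod>i<j. real (M + 1 + i) / real (M - j + 1 + i))"
    by (simp add: prod_dividef)
  finally show ?thesis .
qed

lemma G_ge:
  assumes "n < M"
  shows "prod (hh n) ({..<M} - {n}) \<ge> 1/2"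
proof -
  have "(\<Prod>i<Suc n. real (M + 1 + i) / real (M - Suc n + 1 + i)) \<ge> 1"
    by (intro prod_ge_1) auto
  moreover have "prod (hh n) ({..<M} - {n}) = (fact (M - Suc n) * fact (M + Suc n) / (fact M)^2) / 2"
    unfolding prod_hh[OF assms] by (simp add: field_simps)
  ultimately show ?thesis
    using G_ratio[of "Suc n" M] assms by simp
qed

lemma G_lim:
  "(\<lambda>M. prod (hh n) ({..<M} - {n})) \<longlonglongrightarrow> 1/2"
proof -
  have "(\<lambda>M. (1/2) * (\<Prod>i<Suc n. real (M + 1 + i) / real (M - Suc n + 1 + i))) \<longlonglongrightarrow> (1/2) * (\<Prod>i<Suc n. 1)"
  proof (intro tendsto_mult tendsto_const tendsto_prod)
    fix i assume "i \<in> {..<Suc n}"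
    have "(\<lambda>M. (real M + 1 + real i) / (real M - real (Suc n) + 1 + real i)) \<longlonglongrightarrow> 1"
      by real_asymp
    then show "(\<lambda>M. real (M + 1 + i) / real (M - Suc n + 1 + i)) \<longlonglongrightarrow> 1"
      by (rule Lim_transform_eventually)
        (auto simp: eventually_at_top_linorder of_nat_diff algebra_simps intro!: exI[of _ "Suc n"])
  qed
  then have "(\<lambda>M. (1/2) * (\<Prod>i<Suc n. real (M + 1 + i) / real (M - Suc n + 1 + i))) \<longlonglongrightarrow> 1/2" by simp
  then show ?thesis
  proof (rule Lim_transform_eventually)
    show "\<forall>\<^sub>F M in sequentially. 1/2 * (\<Prod>i<Suc n. real (M + 1 + i) / real (M - Suc n + 1 + i)) = prod (hh n) ({..<M} - {n})"
      unfolding eventually_at_top_linorder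
    proof (intro exI[of _ "Suc n"] allI impI)
      fix M assume "Suc n \<le> M"
      then show "1/2 * (\<Prod>i<Suc n. real (M + 1 + i) / real (M - Suc n + 1 + i)) = prod (hh n) ({..<M} - {n})"
      proof -
        have "prod (hh n) ({..<M} - {n}) = (fact (M - Suc n) * fact (M + Suc n) / (fact M)^2) / 2"
          using \<open>Suc n \<le> M\<close> unfolding prod_hh[of n M, OF Suc_le_lessD[OF \<open>Suc n \<le> M\<close>]] by (simp add: field_simps)
        then show ?thesis using G_ratio[of "Suc n" M] \<open>Suc n \<le> M\<close> by (simp del: prod.lessThan_Suc fact_Suc)
      qed
    qed
  qed
qed



lemma prodinf_lim_lessThan:
  assumes "convergent_prod f"
  shows "(\<lambda>M. \<Prod>m<M. f m) \<longlonglongrightarrow> prodinf (f :: nat \<Rightarrow> complex)"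
  using convergent_prod_LIMSEQ[OF assms] LIMSEQ_lessThan_iff_atMost[of "prod f"] by simp

lemma prodinf_norm_le:
  assumes "convergent_prod f" "eventually (\<lambda>M. norm (\<Prod>m<M. f m) \<le> c) sequentially"
  shows "norm (prodinf (f :: nat \<Rightarrow> complex)) \<le> c"
  using tendsto_norm[OF prodinf_lim_lessThan[OF assms(1)]] assms(2)
  by (intro tendsto_upperbound) auto

lemma prodinf_norm_ge:
  assumes "convergent_prod f" "eventually (\<lambda>M. norm (\<Prod>m<M. f m) \<ge> c) sequentially"
  shows "norm (prodinf (f :: nat \<Rightarrow> complex)) \<ge> c"
  using tendsto_norm[OF prodinf_lim_lessThan[OF assms(1)]] assms(2)
  by (intro tendsto_lowerbound) auto

lemma kf_nn: "k_factor a l n n = 1"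
  by (simp add: k_factor_def)

lemma prod_kf_remove:
  assumes "n < M"
  shows "(\<Prod>m<M. k_factor a l n m) = (\<Prod>m\<in>{..<M}-{n}. k_factor a l n m)"
  using assms by (subst prod.remove[of _ n]) (auto simp: kf_nn)

lemma norm_kf:
  assumes "m \<noteq> n" "a n > 0"
  shows "norm (k_factor a l n m) = norm (1 - l m / complex_of_real (a n)) / \<bar>1 - a m / a n\<bar>"
proof -
  have "1 - complex_of_real (a m / a n) = complex_of_real (1 - a m / a n)" by simp
  then show ?thesis using assms unfolding k_factor_def
    by (simp only: if_False norm_divide) (metis norm_of_real)
qed

lemma num_ge1:
  assumes "Re z \<le> 0" "(c::real) > 0"
  shows "norm (1 - z / complex_of_real c) \<ge> 1"
proof -
  have "Re (1 - z / complex_of_real c) = 1 - Re z / c" by (simp add: Re_divide_of_real)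
  also have "\<dots> \<ge> 1" using assms by (simp add: divide_nonpos_pos)
  finally show ?thesis using complex_Re_le_cmod[of "1 - z / complex_of_real c"] by linarith
qed

lemma num_le:
  assumes "(c::real) > 0"
  shows "norm (1 - z / complex_of_real c) \<le> 1 + norm z / c"
proof -
  have "norm (1 - z / complex_of_real c) \<le> norm (1::complex) + norm (z / complex_of_real c)"
    by (rule norm_triangle_ineq4)
  then show ?thesis using assms by (simp add: norm_divide)
qed

lemma prod_if_const:
  fixes A :: "nat set" and c :: real
  assumes "finite A"
  shows "(\<Prod>m\<in>A. if P m then c else 1) = c ^ card {m\<in>A. P m}"
proof -
  have "(\<Prod>m\<in>A. if P m then c else 1) = (\<Prod>m\<in>A \<inter> {m. P m}. c) * (\<Prod>m\<in>A \<inter> - {m. P m}. 1)"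
    by (rule prod.If_cases[OF assms])
  also have "\<dots> = c ^ card (A \<inter> {m. P m})" by simp
  also have "A \<inter> {m. P m} = {m\<in>A. P m}" by blast
  finally show ?thesis .
qed

lemma in_space_bounded:
  assumes "in_space X b" "valid_space X"
  shows "\<exists>B>0. \<forall>n. norm (b n) \<le> B"
proof -
  have "bounded (range b)"
  proof (cases X)
    case (Lp p)
    then have s: "summable (\<lambda>n. norm (b n) powr p)" using assms by (simp add: in_space_def)
    then have "(\<lambda>n. norm (b n) powr p) \<longlonglongrightarrow> 0" by (rule summable_LIMSEQ_zero)
    then have "eventually (\<lambda>n. norm (b n) powr p < 1) sequentially"
      by (rule order_tendstoD) simp
    then obtain N where N: "\<And>n. n \<ge> N \<Longrightarrow> norm (b n) powr p < 1"
      by (auto simp: eventually_at_top_linorder)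
    have p: "p > 0" using assms(2) Lp by (simp add: valid_space_def)
    have lt1: "norm (b n) < 1" if "n \<ge> N" for n
    proof (rule ccontr)
      assume "\<not> norm (b n) < 1"
      then have "1 \<le> norm (b n) powr p" using p by (simp add: ge_one_powr_ge_zero)
      with N[OF that] show False by simp
    qed
    have "norm (b n) \<le> max (Max ((\<lambda>i. norm (b i)) ` {..N})) 1" for n
    proof (cases "n \<ge> N")
      case True then show ?thesis using lt1[of n] by simp
    next
      case False then show ?thesis by (intro max.coboundedI1 Max_ge) auto
    qed
    then show ?thesis unfolding bounded_iff by auto
  next
    case Linf then show ?thesis using assms by (simp add: in_space_def)
  next
    case Conv then show ?thesis using assms convergent_imp_Bseq[of b] unfolding Bseq_def bounded_iff by (simp add: in_space_def) blast
  next
    case Conv0 then show ?thesis using assms convergent_imp_Bseq[of b] convergentI[of b 0] unfolding Bseq_def bounded_iff by (simp add: in_space_def) blast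
  qed
  then obtain B where B: "\<And>n. norm (b n) \<le> B" unfolding bounded_iff by auto
  then have "\<forall>n. norm (b n) \<le> max B 1" by (meson max.coboundedI1)
  then show ?thesis by (intro exI[of _ "max B 1"]) auto
qed



lemma hh_pos: "m \<noteq> n \<Longrightarrow> hh n m > 0"
  unfolding hh_def by (auto simp: power_divide)

lemma x_powr_ratio:
  assumes "(real (Suc m)) powr d * a m \<le> real (Suc n) powr d * a n" "a n > 0"
  shows "a m / a n \<le> (real (Suc n) / real (Suc m)) powr d"
proof -
  have "a m \<le> real (Suc n) powr d * a n / real (Suc m) powr d"
    using assms by (simp add: field_simps)
  then show ?thesis using assms(2) by (simp add: powr_divide field_simps)
qed

lemma x_powr_ratio':
  assumes "(real (Suc m)) powr d * a m \<ge> real (Suc n) powr d * a n" "a n > 0"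
  shows "a m / a n \<ge> (real (Suc n) / real (Suc m)) powr d"
proof -
  have "a m \<ge> real (Suc n) powr d * a n / real (Suc m) powr d"
    using assms by (simp add: field_simps)
  then show ?thesis using assms(2) by (simp add: powr_divide field_simps)
qed

lemma P1a:
  fixes x d :: real
  assumes "x \<ge> 1" "d \<le> 2"
  shows "x powr d - 1 \<le> x powr (d-2) * (x^2 - 1)"
proof -
  have "x powr d = x powr ((d-2) + 2)" by simp
  also have "\<dots> = x powr (d-2) * x powr 2" by (rule powr_add)
  also have "x powr 2 = x^2" using assms by (simp add: powr_numeral)
  finally have "x powr d = x powr (d-2) * x^2" .
  moreover have "x powr (d-2) \<le> x powr 0" using assms by (intro powr_mono) auto
  then have "x powr (d-2) \<le> 1" using assms by simp
  ultimately show ?thesis by (simp add: algebra_simps)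
qed

lemma P1b:
  fixes x d :: real
  assumes "0 < x" "x \<le> 1" "d \<le> 2"
  shows "x^2 \<le> x powr d"
proof -
  have "x powr 2 \<le> x powr d" using assms by (intro powr_mono') auto
  moreover have "x powr 2 = x^2" using assms by (simp add: powr_numeral)
  ultimately show ?thesis by simp
qed



lemma kf_ge_inv:
  assumes "m \<noteq> n" "a n > 0" "Re (l m) \<le> 0" "\<bar>1 - a m / a n\<bar> \<le> t" "\<bar>1 - a m / a n\<bar> > 0"
  shows "norm (k_factor a l n m) \<ge> 1 / t"
proof -
  have "norm (k_factor a l n m) = norm (1 - l m / complex_of_real (a n)) / \<bar>1 - a m / a n\<bar>"
    using assms(1,2) by (rule norm_kf)
  also have "\<dots> \<ge> 1 / \<bar>1 - a m / a n\<bar>"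
    using num_ge1[OF assms(3) assms(2)] assms(5) by (simp add: divide_right_mono)
  also have "1 / \<bar>1 - a m / a n\<bar> \<ge> 1 / t" using assms(4,5) by (simp add: frac_le)
  finally show ?thesis .
qed

lemma part1_factor:
  fixes a :: "nat \<Rightarrow> real" and l :: "nat \<Rightarrow> complex"
  assumes a_decr: "\<And>m n. m < n \<Longrightarrow> a n < a m" and a_pos: "\<And>n. 0 < a n"
    and d: "d < 2"
    and N0: "\<And>i j. N0 \<le> i \<Longrightarrow> i \<le> j \<Longrightarrow> real (Suc i) powr d * a i \<le> real (Suc j) powr d * a j"
    and l: "\<And>m. Re (l m) \<le> 0"
    and n: "2 * N0 + 1 \<le> n" and mn: "m \<noteq> n"
  shows "norm (k_factor a l n m) \<ge> (if m < N0 then a n / a 0 else if m < (n+1) div 2 then 2 powr (2-d) else 1) / hh n m"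
proof -
  define x where "x = real (Suc n) / real (Suc m)"
  have xpos: "x > 0" unfolding x_def by simp
  have hh: "hh n m = \<bar>1 - x^2\<bar>" unfolding hh_def x_def ..
  have hpos: "hh n m > 0" using mn by (rule hh_pos)
  have an: "a n > 0" by (rule a_pos)
  show ?thesis
  proof (cases "m < n")
    case True
    have r1: "a m / a n > 1" using a_decr[OF True] an by simp
    have abs_r: "\<bar>1 - a m / a n\<bar> = a m / a n - 1" using r1 by simp
    have x1: "x \<ge> 1" unfolding x_def using True by simp
    show ?thesis
    proof (cases "m < N0")
      case True
      have "Suc m * 2 \<le> Suc n" using True n by presburger
      then have "real (Suc m * 2) \<le> real (Suc n)" by (simp only: of_nat_le_iff)
      then have "real (Suc m) * 2 \<le> real (Suc n)" by simp
      then have x2: "x \<ge> 2" unfolding x_def by (simp add: field_simps)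
      then have "x^2 \<ge> 2^2" by (intro power_mono) auto
      then have hh1: "hh n m \<ge> 1" unfolding hh by simp
      have "norm (k_factor a l n m) \<ge> 1 / (a m / a n)"
        using r1 by (intro kf_ge_inv[where l=l and a=a, OF mn an l]) (auto simp: abs_r)
      also have "1 / (a m / a n) = a n / a m" by simp
      also have "a n / a m \<ge> a n / a 0"
        using an a_pos[of m] a_pos[of 0] a_decr[of 0 m] by (cases m) (auto intro: divide_left_mono)
      finally have "norm (k_factor a l n m) \<ge> a n / a 0" .
      moreover have "(a n / a 0) / hh n m \<le> (a n / a 0) / 1"
        using hh1 an a_pos[of 0] by (intro divide_left_mono) auto
      ultimately show ?thesis using True by simp
    next
      case False
      have rle: "a m / a n \<le> x powr d"
        unfolding x_def using False True by (intro x_powr_ratio N0 an) auto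
      have key: "a m / a n - 1 \<le> x powr (d-2) * hh n m"
        using rle P1a[OF x1, of d] d x1 unfolding hh by simp
      show ?thesis
      proof (cases "m < (n+1) div 2")
        case True
        have "Suc m * 2 \<le> Suc n" using True by presburger
        then have "real (Suc m * 2) \<le> real (Suc n)" by (simp only: of_nat_le_iff)
        then have "real (Suc m) * 2 \<le> real (Suc n)" by simp
        then have x2: "x \<ge> 2" unfolding x_def by (simp add: field_simps)
        have "x powr (d-2) \<le> 2 powr (d-2)" using x2 d by (intro powr_mono2') auto
        then have "x powr (d-2) * hh n m \<le> 2 powr (d-2) * hh n m"
          using hpos by (intro mult_right_mono) auto
        then have "a m / a n - 1 \<le> 2 powr (d-2) * hh n m"
          using key by linarith
        then have "norm (k_factor a l n m) \<ge> 1 / (2 powr (d-2) * hh n m)"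
          using r1 by (intro kf_ge_inv[where l=l and a=a, OF mn an l]) (auto simp: abs_r)
        moreover have "1 / (2 powr (d-2) * hh n m) = 2 powr (2-d) / hh n m"
          by (simp add: powr_minus_divide[symmetric] powr_diff field_simps)
        ultimately show ?thesis using True \<open>\<not> m < N0\<close> by simp
      next
        case False
        have "x powr (d-2) \<le> x powr 0" using x1 d by (intro powr_mono) auto
        then have "x powr (d-2) \<le> 1" using xpos by simp
        then have "x powr (d-2) * hh n m \<le> 1 * hh n m"
          using hpos by (intro mult_right_mono) auto
        then have "a m / a n - 1 \<le> hh n m"
          using key by linarith
        then have "norm (k_factor a l n m) \<ge> 1 / hh n m"
          using r1 by (intro kf_ge_inv[where l=l and a=a, OF mn an l]) (auto simp: abs_r)
        then show ?thesis using False \<open>\<not> m < N0\<close> by simp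
      qed
    qed
  next
    case False
    then have nm: "n < m" using mn by simp
    have r1: "a m / a n < 1" using a_decr[OF nm] an by simp
    have abs_r: "\<bar>1 - a m / a n\<bar> = 1 - a m / a n" using r1 by simp
    have x1: "x \<le> 1" unfolding x_def using nm by simp
    have rge: "a m / a n \<ge> x powr d"
      unfolding x_def using nm n by (intro x_powr_ratio' N0 an) auto
    have "1 - a m / a n \<le> 1 - x^2" using rge P1b[OF xpos x1, of d] d by simp
    then have "1 - a m / a n \<le> hh n m" unfolding hh by simp
    then have "norm (k_factor a l n m) \<ge> 1 / hh n m"
      using r1 a_pos[of m] an by (intro kf_ge_inv[where l=l and a=a, OF mn an l]) (auto simp: abs_r)
    then show ?thesis using nm n by auto
  qed
qed



lemma growth_lim:
  fixes c p :: real
  assumes "c > 0"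
  shows "filterlim (\<lambda>n::nat. real (Suc n) powr (-p) * exp (c * real (Suc n))) at_top sequentially"
proof -
  have "filterlim (\<lambda>x::real. x powr (-p) * exp (c * x)) at_top at_top"
    using assms by real_asymp
  moreover have "filterlim (\<lambda>n::nat. real (Suc n)) at_top sequentially"
    by (rule filterlim_compose[OF filterlim_real_sequentially filterlim_Suc])
  ultimately show ?thesis by (rule filterlim_compose)
qed

lemma norm_num_ge:
  assumes "Re z \<le> 0" "(c::real) > 0"
  shows "norm (complex_of_real c - z) \<ge> c"
proof -
  have "Re (complex_of_real c - z) \<ge> c" using assms by simp
  then show ?thesis using complex_Re_le_cmod[of "complex_of_real c - z"] by linarith
qed

lemma part1_prod:
  fixes a :: "nat \<Rightarrow> real" and l :: "nat \<Rightarrow> complex"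
  assumes a_decr: "\<And>m n. m < n \<Longrightarrow> a n < a m" and a_pos: "\<And>n. 0 < a n"
    and d: "d < 2"
    and N0: "\<And>i j. N0 \<le> i \<Longrightarrow> i \<le> j \<Longrightarrow> real (Suc i) powr d * a i \<le> real (Suc j) powr d * a j"
    and l: "\<And>m. Re (l m) \<le> 0"
    and wd: "k_well_defined a l"
    and n: "2 * N0 + 1 \<le> n"
  shows "norm (prodinf (k_factor a l n)) \<ge> (a n / a 0) ^ N0 * (2 powr (2-d)) ^ ((n+1) div 2 - N0)"
proof (rule prodinf_norm_ge)
  show "convergent_prod (k_factor a l n)" using wd unfolding k_well_defined_def by blast
  define J1 where "J1 = (n+1) div 2"
  define \<rho> where "\<rho> = (2::real) powr (2-d)"
  define c1 where "c1 = a n / a 0"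
  define w where "w m = (if m < N0 then c1 else if m < J1 then \<rho> else 1)" for m
  have \<rho>1: "\<rho> \<ge> 1" unfolding \<rho>_def using d by (intro ge_one_powr_ge_zero) auto
  have c1pos: "c1 > 0" unfolding c1_def using a_pos by simp
  have J1n: "J1 \<le> n" "N0 \<le> J1" unfolding J1_def using n by auto
  have ev: "eventually (\<lambda>M. prod (hh n) ({..<M} - {n}) < 1) sequentially"
    using G_lim[of n] by (rule order_tendstoD) simp
  then have ev2: "eventually (\<lambda>M. prod (hh n) ({..<M} - {n}) < 1 \<and> n < M) sequentially"
    by (rule eventually_conj) (rule eventually_gt_at_top)
  show "eventually (\<lambda>M. norm (\<Prod>m<M. k_factor a l n m) \<ge> (a n / a 0) ^ N0 * (2 powr (2-d)) ^ ((n+1) div 2 - N0)) sequentially"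
    using ev2
  proof eventually_elim
    case (elim M)
    then have nM: "n < M" and G1: "prod (hh n) ({..<M} - {n}) < 1" by auto
    define R where "R = {..<M} - {n}"
    have finR: "finite R" unfolding R_def by simp
    have Gpos: "prod (hh n) R > 0" using hh_pos by (intro prod_pos) (auto simp: R_def)
    have wnn: "w m \<ge> 0" for m unfolding w_def using c1pos \<rho>1 by auto
    have fac: "norm (k_factor a l n m) \<ge> w m / hh n m" if "m \<in> R" for m
      using part1_factor[OF a_decr a_pos d N0 l n, of m] that
      unfolding w_def c1_def \<rho>_def J1_def R_def by auto
    have "norm (\<Prod>m<M. k_factor a l n m) = (\<Prod>m\<in>R. norm (k_factor a l n m))"
      unfolding prod_kf_remove[OF nM] R_def by (simp add: prod_norm)
    also have "\<dots> \<ge> (\<Prod>m\<in>R. w m / hh n m)"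
      using fac wnn hh_pos by (intro prod_mono) (auto simp: R_def less_imp_le)
    finally have "norm (\<Prod>m<M. k_factor a l n m) \<ge> prod w R / prod (hh n) R"
      by (simp add: prod_dividef)
    moreover have "prod w R / prod (hh n) R \<ge> prod w R / 1"
      using G1 Gpos wnn unfolding R_def by (intro divide_left_mono prod_nonneg) auto
    moreover have "prod w R = c1 ^ N0 * \<rho> ^ (J1 - N0)"
    proof -
      have "w m = (if m < N0 then c1 else 1) * (if N0 \<le> m \<and> m < J1 then \<rho> else 1)" for m
        unfolding w_def by auto
      then have "prod w R = (\<Prod>m\<in>R. if m < N0 then c1 else 1) * (\<Prod>m\<in>R. if N0 \<le> m \<and> m < J1 then \<rho> else 1)"
        by (simp add: prod.distrib)
      also have "\<dots> = c1 ^ card {m\<in>R. m < N0} * \<rho> ^ card {m\<in>R. N0 \<le> m \<and> m < J1}"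
        using finR by (simp add: prod_if_const)
      also have "{m\<in>R. m < N0} = {..<N0}" using nM n unfolding R_def by auto
      also have "{m\<in>R. N0 \<le> m \<and> m < J1} = {N0..<J1}" using nM J1n unfolding R_def by auto
      finally show ?thesis by simp
    qed
    ultimately show ?case unfolding c1_def \<rho>_def J1_def by simp
  qed
qed



lemma part1:
  fixes a :: "nat \<Rightarrow> real" and l b :: "nat \<Rightarrow> complex"
  assumes a_decr: "\<And>m n. m < n \<Longrightarrow> a n < a m" and a_pos: "\<And>n. 0 < a n"
    and d: "d < 2"
    and N0: "\<And>i j. N0 \<le> i \<Longrightarrow> i \<le> j \<Longrightarrow> real (Suc i) powr d * a i \<le> real (Suc j) powr d * a j"
    and l: "\<And>m. Re (l m) \<le> 0"
    and wd: "k_well_defined a l"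
    and B: "\<And>n. norm (b n) \<le> B" and b_nz: "\<And>n. b n \<noteq> 0"
    and Kb: "\<And>n. norm (k a b l n) \<le> Kb"
  shows False
proof -
  define \<rho> where "\<rho> = (2::real) powr (2-d)"
  have \<rho>1: "\<rho> > 1" unfolding \<rho>_def using d by (intro gr_one_powr) auto
  define c0 where "c0 = real (Suc N0) powr d * a N0"
  have c0: "c0 > 0" unfolding c0_def using a_pos by simp
  have Bpos: "B > 0" using B[of 0] b_nz[of 0] by (meson norm_le_zero_iff not_le order_trans)
  define c where "c = ln \<rho> / 2"
  have cpos: "c > 0" unfolding c_def using \<rho>1 by simp
  define p where "p = d * real (Suc N0)"
  define C1 where "C1 = (c0 / B) * (c0 / a 0) ^ N0 * exp (- (ln \<rho>) * (1 + real N0))"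
  have C1: "C1 > 0" unfolding C1_def using c0 Bpos a_pos by simp
  have lower: "norm (k a b l n) \<ge> C1 * (real (Suc n) powr (-p) * exp (c * real (Suc n)))"
    if n: "2 * N0 + 1 \<le> n" for n
  proof -
    define S where "S = real (Suc n)"
    have S: "S \<ge> 1" unfolding S_def by simp
    have an_ge: "a n \<ge> c0 * S powr (-d)"
    proof -
      have "c0 \<le> S powr d * a n" unfolding c0_def S_def using n by (intro N0) auto
      then have "c0 * S powr (-d) \<le> S powr d * a n * S powr (-d)"
        by (intro mult_right_mono) auto
      also have "\<dots> = a n" using S by (simp add: powr_minus field_simps)
      finally show ?thesis .
    qed
    have P: "norm (prodinf (k_factor a l n)) \<ge> (a n / a 0) ^ N0 * \<rho> ^ ((n+1) div 2 - N0)"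
      unfolding \<rho>_def by (rule part1_prod[OF a_decr a_pos d N0 l wd n])
    have "norm (k a b l n) = norm (complex_of_real (a n) - l n) / norm (b n) * norm (prodinf (k_factor a l n))"
      unfolding k_def by (simp add: norm_mult norm_divide)
    also have "\<dots> \<ge> (a n / B) * ((a n / a 0) ^ N0 * \<rho> ^ ((n+1) div 2 - N0))"
    proof (intro mult_mono P)
      have "norm (complex_of_real (a n) - l n) \<ge> a n" using l a_pos by (rule norm_num_ge)
      moreover have "norm (b n) > 0" using b_nz by simp
      ultimately show "a n / B \<le> norm (complex_of_real (a n) - l n) / norm (b n)"
        using B[of n] a_pos[of n] by (intro frac_le) auto
    qed (use a_pos[of n] a_pos[of 0] \<rho>1 in auto)
    finally have k1: "norm (k a b l n) \<ge> (a n / B) * ((a n / a 0) ^ N0 * \<rho> ^ ((n+1) div 2 - N0))" .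
    have e1: "a n / B \<ge> c0 * S powr (-d) / B" using an_ge Bpos by (simp add: divide_right_mono)
    have e2: "(a n / a 0) ^ N0 \<ge> (c0 * S powr (-d) / a 0) ^ N0"
      using an_ge a_pos[of 0] c0 by (intro power_mono divide_right_mono) (auto intro: less_imp_le)
    have e3: "\<rho> ^ ((n+1) div 2 - N0) \<ge> exp (ln \<rho> * (S / 2 - 1 - real N0))"
    proof -
      have h1: "N0 \<le> (n+1) div 2" "n \<le> 2 * ((n+1) div 2)" using n by auto
      then have "real ((n+1) div 2 - N0) = real ((n+1) div 2) - real N0" by (simp add: of_nat_diff)
      moreover have "real n \<le> 2 * real ((n+1) div 2)" using h1(2) by (metis of_nat_le_iff of_nat_mult of_nat_numeral)
      ultimately have "real ((n+1) div 2 - N0) \<ge> S / 2 - 1 - real N0" unfolding S_def by simp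
      then have "exp (ln \<rho> * (S / 2 - 1 - real N0)) \<le> exp (ln \<rho> * real ((n+1) div 2 - N0))"
        using \<rho>1 by simp
      also have "\<dots> = \<rho> ^ ((n+1) div 2 - N0)" using \<rho>1 by (simp add: exp_of_nat2_mult)
      finally show ?thesis .
    qed
    have "(a n / B) * ((a n / a 0) ^ N0 * \<rho> ^ ((n+1) div 2 - N0)) \<ge>
          (c0 * S powr (-d) / B) * ((c0 * S powr (-d) / a 0) ^ N0 * exp (ln \<rho> * (S / 2 - 1 - real N0)))"
      using e1 e2 e3 c0 a_pos[of n] a_pos[of 0] Bpos by (intro mult_mono) (auto intro: less_imp_le)
    moreover have "(c0 * S powr (-d) / B) * ((c0 * S powr (-d) / a 0) ^ N0 * exp (ln \<rho> * (S / 2 - 1 - real N0)))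
        = C1 * (S powr (-p) * exp (c * S))"
    proof -
      have "(S powr (-d)) ^ N0 * S powr (-d) = S powr (-p)"
        unfolding p_def using S by (simp add: powr_realpow[symmetric] powr_powr powr_add[symmetric] algebra_simps)
      moreover have "exp (ln \<rho> * (S / 2 - 1 - real N0)) = exp (- (ln \<rho>) * (1 + real N0)) * exp (c * S)"
        unfolding c_def by (simp add: exp_add[symmetric] algebra_simps)
      ultimately show ?thesis unfolding C1_def by (simp add: power_mult_distrib power_divide field_simps)
    qed
    ultimately show ?thesis using k1 unfolding S_def by linarith
  qed
  have "filterlim (\<lambda>n::nat. real (Suc n) powr (-p) * exp (c * real (Suc n))) at_top sequentially"
    using cpos by (rule growth_lim)
  then have "eventually (\<lambda>n. real (Suc n) powr (-p) * exp (c * real (Suc n)) > Kb / C1) sequentially"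
    by (simp add: filterlim_at_top_dense)
  moreover have "eventually (\<lambda>n. 2 * N0 + 1 \<le> n) sequentially" by (rule eventually_ge_at_top)
  ultimately obtain n where n1: "real (Suc n) powr (-p) * exp (c * real (Suc n)) > Kb / C1" and n2: "2 * N0 + 1 \<le> n"
    using eventually_happens'[OF sequentially_bot] by (metis (mono_tags, lifting) eventually_conj eventually_happens' sequentially_bot)
  have "C1 * (real (Suc n) powr (-p) * exp (c * real (Suc n))) > Kb"
    using n1 C1 by (simp add: field_simps)
  with lower[OF n2] Kb[of n] show False by linarith
qed



lemma frac_aux:
  fixes z A B :: complex
  assumes "A \<noteq> 0" "A \<noteq> B"
  shows "(1 - z / A) / (1 - B / A) = (A - z) / (A - B)"
proof -
  have "1 - z / A = (A - z) / A" "1 - B / A = (A - B) / A" using assms by (simp_all add: field_simps)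
  then show ?thesis using assms by simp
qed

lemma norm_kf2:
  assumes "m \<noteq> n" "a n > 0" "a m \<noteq> a n"
  shows "norm (k_factor a l n m) = norm (complex_of_real (a n) - l m) / \<bar>a n - a m\<bar>"
proof -
  have "k_factor a l n m = (complex_of_real (a n) - l m) / complex_of_real (a n - a m)"
    using assms unfolding k_factor_def by (simp add: frac_aux)
  then show ?thesis by (simp only: norm_divide norm_of_real)
qed

lemma part2_factor:
  fixes a :: "nat \<Rightarrow> real" and l :: "nat \<Rightarrow> complex"
  assumes a_decr: "\<And>m n. m < n \<Longrightarrow> a n < a m" and a_pos: "\<And>n. 0 < a n"
    and d: "d \<ge> 2"
    and N0: "\<And>i j. N0 \<le> i \<Longrightarrow> i \<le> j \<Longrightarrow> real (Suc j) powr d * a j \<le> real (Suc i) powr d * a i"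
    and lK: "\<And>m. K \<le> m \<Longrightarrow> norm (l m) \<le> \<epsilon> * a m" and eps: "\<epsilon> \<ge> 0"
    and L: "\<And>m. norm (l m) \<le> L"
    and C0: "\<And>m. m < K \<Longrightarrow> (a 0 + L) / (a m - a (Suc m)) \<le> C0"
    and KN0: "N0 \<le> K" and KJ: "K \<le> J" and Jn: "J \<le> n" and T2: "T \<ge> 2"
    and J1: "real J * T \<le> real (Suc n)" and J2: "real (Suc n) < (real J + 1) * T"
    and eta: "2 / T powr d + 2 * \<epsilon> \<le> \<eta>"
    and mn: "m \<noteq> n"
  shows "norm (k_factor a l n m) * hh n m \<le>
    (if m < K then C0 * (real (Suc n) / real (Suc m))^2
     else if m < J then \<eta> * (real (Suc n) / real (Suc m))^2
     else if m < n then 1 + \<epsilon> * T^2 else 1 + \<epsilon> * (real (Suc n) / real (Suc m))^2)"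
proof -
  define x where "x = real (Suc n) / real (Suc m)"
  define s where "s = x^2"
  have xpos: "x > 0" unfolding x_def by simp
  have T: "T \<ge> 1" using T2 by simp
  have hh: "hh n m = \<bar>1 - s\<bar>" unfolding hh_def x_def s_def ..
  have an: "a n > 0" by (rule a_pos)
  have am: "a m > 0" by (rule a_pos)
  have ne: "a m \<noteq> a n" using a_decr[of m n] a_decr[of n m] mn by (cases "m < n") auto
  have f: "norm (k_factor a l n m) = norm (complex_of_real (a n) - l m) / \<bar>a n - a m\<bar>"
    using mn an ne by (rule norm_kf2)
  have num: "norm (complex_of_real (a n) - l m) \<le> a n + norm (l m)"
    using norm_triangle_ineq4[of "complex_of_real (a n)" "l m"] an by simp
  have fnn: "norm (k_factor a l n m) \<ge> 0" by simp
  show ?thesis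
  proof (cases "m < n")
    case mlt: True
    have amn: "a m > a n" using a_decr[OF mlt] .
    have x1: "x \<ge> 1" unfolding x_def using mlt by simp
    have "x^2 \<ge> 1" using x1 by simp
    then have hle: "hh n m \<le> x^2" unfolding hh s_def by simp
    have hnn: "hh n m \<ge> 0" unfolding hh by simp
    show ?thesis
    proof (cases "m < K")
      case True
      have "a (Suc m) \<ge> a n" using mlt a_decr[of "Suc m" n] by (cases "Suc m = n") auto
      then have den: "\<bar>a n - a m\<bar> \<ge> a m - a (Suc m)" using amn by simp
      have dpos: "a m - a (Suc m) > 0" using a_decr[of m "Suc m"] by simp
      have "norm (k_factor a l n m) \<le> (a n + L) / (a m - a (Suc m))"
      proof -
        have "L \<ge> 0" using L[of m] norm_ge_zero[of "l m"] by linarith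
        then show ?thesis unfolding f using num L[of m] den dpos an by (intro frac_le) auto
      qed
      also have "\<dots> \<le> (a 0 + L) / (a m - a (Suc m))"
      proof -
        have "a n \<le> a 0" using a_decr[of 0 n] by (cases n) auto
        then show ?thesis using dpos by (intro divide_right_mono) auto
      qed
      also have "\<dots> \<le> C0" using C0 True by blast
      finally have "norm (k_factor a l n m) \<le> C0" .
      then have "norm (k_factor a l n m) * hh n m \<le> C0 * x^2"
        using hle hnn fnn by (intro mult_mono) (auto intro: order_trans[OF fnn])
      then show ?thesis using True unfolding x_def by simp
    next
      case notK: False
      have Nm: "N0 \<le> m" using notK KN0 by simp
      have lm: "norm (l m) \<le> \<epsilon> * a m" using lK notK by simp
      have rge: "a m / a n \<ge> x powr d"
        unfolding x_def using Nm mlt by (intro x_powr_ratio' N0 an) auto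
      show ?thesis
      proof (cases "m < J")
        case True
        have "real (Suc m) \<le> real J" using True by simp
        then have "real (Suc m) * T \<le> real (Suc n)" using J1 T by (meson mult_right_mono order_trans le_numeral_extra(1) zero_le_one order.trans less_imp_le)
        then have xT: "x \<ge> T" unfolding x_def by (simp add: field_simps)
        have "x powr d \<ge> T powr d" using xT T d by (intro powr_mono2) auto
        moreover have "a n * x powr d \<le> a m" using rge an by (simp add: field_simps)
        ultimately have "a n * T powr d \<le> a m" using an by (meson mult_left_mono less_imp_le order_trans)
        then have ram: "a m \<ge> T powr d * a n" by (simp add: mult.commute)
        have Td2: "T powr d \<ge> 2"
        proof -
          have "T powr d \<ge> T powr 2" using T d by (intro powr_mono) auto
          moreover have "T powr 2 = T^2" using T by (simp add: powr_numeral)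
          moreover have "T^2 \<ge> 2^2" using T2 by (intro power_mono) auto
          ultimately show ?thesis by simp
        qed
        have "norm (k_factor a l n m) \<le> (a n + \<epsilon> * a m) / (a m - a n)"
          unfolding f using num lm amn eps an am by (intro frac_le) auto
        also have "\<dots> \<le> (a n + \<epsilon> * a m) / (a m / 2)"
        proof -
          have "a n * 2 \<le> a n * T powr d" using Td2 an by simp
          then have "a n * 2 \<le> a m" using ram by (simp add: mult.commute)
          then show ?thesis using an am eps by (intro divide_left_mono) (auto simp: field_simps)
        qed
        also have "\<dots> = 2 * (a n / a m) + 2 * \<epsilon>" using am by (simp add: field_simps)
        also have "\<dots> \<le> 2 / T powr d + 2 * \<epsilon>"
        proof -
          have "a n / a m \<le> 1 / T powr d" using ram an am Td2 T by (simp add: divide_simps mult.commute)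
          then show ?thesis by simp
        qed
        also have "\<dots> \<le> \<eta>" by (rule eta)
        finally have "norm (k_factor a l n m) \<le> \<eta>" .
        then have "norm (k_factor a l n m) * hh n m \<le> \<eta> * x^2"
          using hle hnn fnn by (intro mult_mono) (auto intro: order_trans[OF fnn])
        then show ?thesis using True notK unfolding x_def by simp
      next
        case False
        have "real (Suc n) < real (Suc m) * T" using J2 False T
          by (smt (verit, ccfv_SIG) mult_right_mono of_nat_Suc of_nat_le_iff not_less)
        then have xT: "x < T" unfolding x_def by (simp add: field_simps)
        have sx: "x powr d \<ge> s"
        proof -
          have "x powr d \<ge> x powr 2" using x1 d by (intro powr_mono) auto
          moreover have "x powr 2 = x^2" using xpos by (simp add: powr_numeral)
          ultimately show ?thesis unfolding s_def by simp
        qed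
        have s1: "s \<ge> 1" unfolding s_def using x1 by simp
        have "s * a n \<le> x powr d * a n" using sx an by (intro mult_right_mono) auto
        moreover have "x powr d * a n \<le> a m" using rge an by (simp add: field_simps)
        ultimately have ams: "a m \<ge> s * a n" by linarith
        have "norm (k_factor a l n m) * hh n m \<le> (a n + \<epsilon> * a m) / (a m - a n) * (s - 1)"
        proof -
          have e: "\<bar>a n - a m\<bar> = a m - a n" "\<bar>1 - s\<bar> = s - 1" using amn s1 by auto
          show ?thesis unfolding f hh e using num lm amn s1 eps an am by (intro mult_right_mono frac_le) auto
        qed
        also have "\<dots> \<le> 1 + \<epsilon> * s"
        proof -
          have "(a n + \<epsilon> * a m) * (s - 1) \<le> (1 + \<epsilon> * s) * (a m - a n)"
          proof -
            have "(1 + \<epsilon> * s) * (a m - a n) - (a n + \<epsilon> * a m) * (s - 1) = (1 + \<epsilon>) * (a m - s * a n)"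
              by (simp add: algebra_simps)
            also have "\<dots> \<ge> 0" using ams eps by simp
            finally show ?thesis by simp
          qed
          then show ?thesis using amn by (simp add: field_simps)
        qed
        also have "\<dots> \<le> 1 + \<epsilon> * T^2"
          using xT xpos eps unfolding s_def by (intro add_left_mono mult_left_mono power_mono) auto
        finally show ?thesis using False notK mlt by simp
      qed
    qed
  next
    case False
    then have nm: "n < m" using mn by simp
    have amn: "a m < a n" using a_decr[OF nm] .
    have x1: "x \<le> 1" unfolding x_def using nm by simp
    have Km: "K \<le> m" using nm KJ Jn by simp
    have lm: "norm (l m) \<le> \<epsilon> * a m" using lK Km by simp
    have rle: "a m / a n \<le> x powr d"
      unfolding x_def using nm KN0 KJ Jn by (intro x_powr_ratio N0 an) auto
    have sx: "x powr d \<le> s"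
    proof -
      have "x powr d \<le> x powr 2" using x1 xpos d by (intro powr_mono') auto
      moreover have "x powr 2 = x^2" using xpos by (simp add: powr_numeral)
      ultimately show ?thesis unfolding s_def by simp
    qed
    have s1: "s \<le> 1" unfolding s_def using x1 xpos by (simp add: power_le_one)
    have "x powr d * a n \<le> s * a n" using sx an by (intro mult_right_mono) auto
    moreover have "a m \<le> x powr d * a n" using rle an by (simp add: field_simps)
    ultimately have ams: "a m \<le> s * a n" by linarith
    have "norm (k_factor a l n m) * hh n m \<le> (a n + \<epsilon> * a m) / (a n - a m) * (1 - s)"
    proof -
      have e: "\<bar>a n - a m\<bar> = a n - a m" "\<bar>1 - s\<bar> = 1 - s" using amn s1 by auto
      show ?thesis unfolding f hh e using num lm amn s1 eps an am by (intro mult_right_mono frac_le) auto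
    qed
    also have "\<dots> \<le> 1 + \<epsilon> * s"
    proof -
      have "(a n + \<epsilon> * a m) * (1 - s) \<le> (1 + \<epsilon> * s) * (a n - a m)"
      proof -
        have "(1 + \<epsilon> * s) * (a n - a m) - (a n + \<epsilon> * a m) * (1 - s) = (1 + \<epsilon>) * (s * a n - a m)"
          by (simp add: algebra_simps)
        also have "\<dots> \<ge> 0" using ams eps by simp
        finally show ?thesis by simp
      qed
      then show ?thesis using amn by (simp add: field_simps)
    qed
    finally show ?thesis using nm KJ Jn unfolding s_def x_def by auto
  qed
qed



lemma sum_inv_sq:
  "(\<Sum>m\<in>{n<..<M}. 1 / real (Suc m)^2) \<le> 1 / real (Suc n)"
proof (cases "n < M")
  case False then show ?thesis by simp
next
  case True
  have "(\<Sum>m\<in>{n<..<M}. 1 / real (Suc m)^2) + 1 / real M \<le> 1 / real (Suc n)" if "Suc n \<le> M" for M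
    using that
  proof (induction M rule: dec_induct)
    case base
    have "{n<..<Suc n} = {}" by auto
    then show ?case by simp
  next
    case (step M)
    have Mpos: "real M > 0" using step by simp
    have "{n<..<Suc M} = insert M {n<..<M}" using step by auto
    then have "(\<Sum>m\<in>{n<..<Suc M}. 1 / real (Suc m)^2) = 1 / real (Suc M)^2 + (\<Sum>m\<in>{n<..<M}. 1 / real (Suc m)^2)"
      by simp
    moreover have "1 / real (Suc M)^2 + 1 / real (Suc M) \<le> 1 / real M"
    proof -
      have "1 / real (Suc M)^2 \<le> 1 / (real M * real (Suc M))"
        using Mpos by (intro divide_left_mono) (auto simp: power2_eq_square)
      also have "\<dots> = 1 / real M - 1 / real (Suc M)" using Mpos by (simp add: field_simps)
      finally show ?thesis by simp
    qed
    ultimately show ?case using step.IH by linarith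
  qed
  then show ?thesis using True by (smt (verit) Suc_leI of_nat_0_le_iff divide_nonneg_nonneg)
qed

lemma prod_exp_bound:
  assumes eps: "\<epsilon> \<ge> 0"
  shows "(\<Prod>m\<in>{n<..<M}. 1 + \<epsilon> * (real (Suc n) / real (Suc m))^2) \<le> exp (\<epsilon> * real (Suc n))"
proof -
  have "(\<Prod>m\<in>{n<..<M}. 1 + \<epsilon> * (real (Suc n) / real (Suc m))^2) \<le> (\<Prod>m\<in>{n<..<M}. exp (\<epsilon> * (real (Suc n) / real (Suc m))^2))"
    using eps by (intro prod_mono conjI) (auto intro: exp_ge_add_one_self add_nonneg_nonneg)
  also have "\<dots> = exp (\<Sum>m\<in>{n<..<M}. \<epsilon> * (real (Suc n) / real (Suc m))^2)"
    by (simp add: exp_sum)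
  also have "(\<Sum>m\<in>{n<..<M}. \<epsilon> * (real (Suc n) / real (Suc m))^2) = \<epsilon> * real (Suc n)^2 * (\<Sum>m\<in>{n<..<M}. 1 / real (Suc m)^2)"
    by (simp add: sum_distrib_left power_divide)
  also have "\<dots> \<le> \<epsilon> * real (Suc n)^2 * (1 / real (Suc n))"
    using eps by (intro mult_left_mono sum_inv_sq) auto
  also have "\<dots> = \<epsilon> * real (Suc n)" by (simp add: power2_eq_square)
  finally show ?thesis by simp
qed



lemma part2_prod:
  fixes a :: "nat \<Rightarrow> real" and l :: "nat \<Rightarrow> complex"
  assumes a_decr: "\<And>m n. m < n \<Longrightarrow> a n < a m" and a_pos: "\<And>n. 0 < a n"
    and d: "d \<ge> 2"
    and N0: "\<And>i j. N0 \<le> i \<Longrightarrow> i \<le> j \<Longrightarrow> real (Suc j) powr d * a j \<le> real (Suc i) powr d * a i"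
    and lK: "\<And>m. K \<le> m \<Longrightarrow> norm (l m) \<le> \<epsilon> * a m" and eps: "\<epsilon> \<ge> 0"
    and L: "\<And>m. norm (l m) \<le> L"
    and C0: "\<And>m. m < K \<Longrightarrow> (a 0 + L) / (a m - a (Suc m)) \<le> C0" and C0pos: "C0 \<ge> 0"
    and KN0: "N0 \<le> K" and KJ: "K \<le> J" and Jn: "J \<le> n" and T2: "T \<ge> 2"
    and J1: "real J * T \<le> real (Suc n)" and J2: "real (Suc n) < (real J + 1) * T"
    and eta: "2 / T powr d + 2 * \<epsilon> \<le> \<eta>"
    and conv: "convergent_prod (k_factor a l n)"
  shows "norm (prodinf (k_factor a l n)) \<le>
     2 * (C0 ^ K * \<eta> ^ (J - K) * (\<Prod>m<J. (real (Suc n) / real (Suc m))^2) *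
          (1 + \<epsilon> * T^2) ^ (n - J) * exp (\<epsilon> * real (Suc n)))"
proof (rule prodinf_norm_le[OF conv])
  have etapos: "\<eta> \<ge> 0"
  proof -
    have "T powr d > 0" using T2 by simp
    then have "2 / T powr d \<ge> 0" by simp
    then show ?thesis using eta eps by linarith
  qed
  define x where "x m = real (Suc n) / real (Suc m)" for m
  define u where "u m = (if m < K then C0 * (x m)^2
     else if m < J then \<eta> * (x m)^2
     else if m < n then 1 + \<epsilon> * T^2 else 1 + \<epsilon> * (x m)^2)" for m
  show "eventually (\<lambda>M. norm (\<Prod>m<M. k_factor a l n m) \<le>
     2 * (C0 ^ K * \<eta> ^ (J - K) * (\<Prod>m<J. (real (Suc n) / real (Suc m))^2) *
          (1 + \<epsilon> * T^2) ^ (n - J) * exp (\<epsilon> * real (Suc n)))) sequentially"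
    using eventually_gt_at_top[of n]
  proof eventually_elim
    case (elim M)
    then have nM: "n < M" .
    define R where "R = {..<M} - {n}"
    have finR: "finite R" unfolding R_def by simp
    have Gpos: "prod (hh n) R \<ge> 1/2" unfolding R_def by (rule G_ge[OF nM])
    have fac: "norm (k_factor a l n m) * hh n m \<le> u m" if "m \<in> R" for m
      using part2_factor[OF a_decr a_pos d N0 lK eps L C0 KN0 KJ Jn T2 J1 J2 eta, of m] that
      unfolding u_def x_def R_def by auto
    have "norm (\<Prod>m<M. k_factor a l n m) = (\<Prod>m\<in>R. norm (k_factor a l n m))"
      unfolding prod_kf_remove[OF nM] R_def by (simp add: prod_norm)
    also have "\<dots> = (\<Prod>m\<in>R. norm (k_factor a l n m) * hh n m) / prod (hh n) R"
    proof -
      have "prod (hh n) R > 0" using hh_pos unfolding R_def by (intro prod_pos) auto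
      then have "prod (hh n) R \<noteq> 0" by simp
      then show ?thesis by (simp add: prod.distrib)
    qed
    also have "\<dots> \<le> prod u R / prod (hh n) R"
      using fac hh_pos Gpos by (intro divide_right_mono prod_mono) (auto simp: R_def less_imp_le)
    also have "\<dots> \<le> prod u R / (1/2)"
    proof (rule divide_left_mono)
      show "prod u R \<ge> 0" using fac hh_pos
        by (intro prod_nonneg) (smt (verit) norm_ge_zero mult_nonneg_nonneg R_def DiffE insertI1)
    qed (use Gpos in auto)
    also have "prod u R / (1/2) = 2 * prod u R" by simp
    finally have A: "norm (\<Prod>m<M. k_factor a l n m) \<le> 2 * prod u R" .
    have "u m = (if m < K then C0 else 1) * (if K \<le> m \<and> m < J then \<eta> else 1) * (if m < J then (x m)^2 else 1)
       * (if J \<le> m \<and> m < n then 1 + \<epsilon> * T^2 else 1) * (if n < m then 1 + \<epsilon> * (x m)^2 else 1)"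
      if "m \<in> R" for m
      using that KJ Jn unfolding u_def R_def by auto
    then have "prod u R = (\<Prod>m\<in>R. if m < K then C0 else 1) * (\<Prod>m\<in>R. if K \<le> m \<and> m < J then \<eta> else 1)
        * (\<Prod>m\<in>R. if m < J then (x m)^2 else 1) * (\<Prod>m\<in>R. if J \<le> m \<and> m < n then 1 + \<epsilon> * T^2 else 1)
        * (\<Prod>m\<in>R. if n < m then 1 + \<epsilon> * (x m)^2 else 1)"
      by (simp add: prod.distrib[symmetric] cong: prod.cong)
    also have "\<dots> = C0 ^ card {m\<in>R. m < K} * \<eta> ^ card {m\<in>R. K \<le> m \<and> m < J}
        * (\<Prod>m\<in>{m\<in>R. m < J}. (x m)^2) * (1 + \<epsilon> * T^2) ^ card {m\<in>R. J \<le> m \<and> m < n}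
        * (\<Prod>m\<in>{m\<in>R. n < m}. 1 + \<epsilon> * (x m)^2)"
      using finR by (simp add: prod_if_const prod.inter_filter)
    also have "{m\<in>R. m < K} = {..<K}" using KJ Jn nM unfolding R_def by auto
    also have "{m\<in>R. K \<le> m \<and> m < J} = {K..<J}" using KJ Jn nM unfolding R_def by auto
    also have "{m\<in>R. m < J} = {..<J}" using KJ Jn nM unfolding R_def by auto
    also have "{m\<in>R. J \<le> m \<and> m < n} = {J..<n}" using KJ Jn nM unfolding R_def by auto
    also have "{m\<in>R. n < m} = {n<..<M}" using nM unfolding R_def by auto
    finally have B: "prod u R = C0 ^ K * \<eta> ^ (J - K) * (\<Prod>m<J. (x m)^2) * (1 + \<epsilon> * T^2) ^ (n - J)
        * (\<Prod>m\<in>{n<..<M}. 1 + \<epsilon> * (x m)^2)" by simp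
    have "(\<Prod>m\<in>{n<..<M}. 1 + \<epsilon> * (x m)^2) \<le> exp (\<epsilon> * real (Suc n))"
      unfolding x_def using eps by (rule prod_exp_bound)
    then have "prod u R \<le> C0 ^ K * \<eta> ^ (J - K) * (\<Prod>m<J. (x m)^2) * (1 + \<epsilon> * T^2) ^ (n - J) * exp (\<epsilon> * real (Suc n))"
      unfolding B using C0pos etapos eps by (intro mult_left_mono mult_nonneg_nonneg zero_le_power prod_nonneg) (auto simp: x_def)
    with A show ?case unfolding x_def by linarith
  qed
qed



lemma pow_fact_exp:
  fixes y :: real
  assumes "y \<ge> 0"
  shows "y ^ j / fact j \<le> exp y"
proof -
  have s: "(\<lambda>n. y ^ n / fact n) sums exp y" using exp_converges[of y] by (simp add: divide_inverse_commute)
  have "(\<Sum>n\<in>{j}. y ^ n / fact n) \<le> (\<Sum>n. y ^ n / fact n)"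
    using s assms by (intro sum_le_suminf) (auto simp: sums_iff)
  then show ?thesis using s by (simp add: sums_iff)
qed

lemma a_summable:
  fixes a :: "nat \<Rightarrow> real"
  assumes a_pos: "\<And>n. 0 < a n" and d: "d > 1"
    and N0: "\<And>i j. N0 \<le> i \<Longrightarrow> i \<le> j \<Longrightarrow> real (Suc j) powr d * a j \<le> real (Suc i) powr d * a i"
  shows "summable a"
proof (rule summable_comparison_test_ev)
  have "summable (\<lambda>n. real n powr (-d))" using d by (simp add: summable_real_powr_iff)
  then have "summable (\<lambda>n. real (Suc n) powr (-d))"
    using summable_ignore_initial_segment[of "\<lambda>n. real n powr (-d)" 1] by (simp del: of_nat_Suc)
  then show "summable (\<lambda>n. (real (Suc N0) powr d * a N0) * real (Suc n) powr (-d))"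
    by (rule summable_mult)
  show "\<forall>\<^sub>F n in sequentially. norm (a n) \<le> (real (Suc N0) powr d * a N0) * real (Suc n) powr (-d)"
    using eventually_ge_at_top[of N0]
  proof eventually_elim
    case (elim n)
    have "real (Suc n) powr d * a n \<le> real (Suc N0) powr d * a N0" using elim by (intro N0) auto
    then have "real (Suc n) powr d * a n * real (Suc n) powr (-d) \<le> (real (Suc N0) powr d * a N0) * real (Suc n) powr (-d)"
      by (intro mult_right_mono) auto
    moreover have "real (Suc n) powr d * a n * real (Suc n) powr (-d) = a n"
      by (simp add: powr_minus field_simps)
    ultimately have "a n \<le> (real (Suc N0) powr d * a N0) * real (Suc n) powr (-d)" by linarith
    then show ?case using a_pos[of n] by simp
  qed
qed

lemma part2_conv:
  fixes a :: "nat \<Rightarrow> real" and l :: "nat \<Rightarrow> complex"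
  assumes a_decr: "\<And>m n. m < n \<Longrightarrow> a n < a m" and a_pos: "\<And>n. 0 < a n"
    and asum: "summable a"
    and l: "\<And>m. Re (l m) \<le> 0"
    and la: "eventually (\<lambda>m. norm (l m) \<le> a m) sequentially"
  shows "convergent_prod (k_factor a l n)"
proof -
  define z where "z m = k_factor a l n m - 1" for m
  have nz: "z m \<noteq> -1" for m
  proof (cases "m = n")
    case True then show ?thesis by (simp add: z_def kf_nn)
  next
    case False
    have ne: "a m \<noteq> a n" using a_decr[of m n] a_decr[of n m] False by (cases "m < n") auto
    have "norm (complex_of_real (a n) - l m) \<ge> a n" using l a_pos by (rule norm_num_ge)
    then have "norm (k_factor a l n m) > 0"
    proof -
      have "\<bar>a n - a m\<bar> > 0" using ne by simp
      moreover have "norm (complex_of_real (a n) - l m) > 0" using \<open>norm (complex_of_real (a n) - l m) \<ge> a n\<close> a_pos[of n] by linarith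
      ultimately show ?thesis using norm_kf2[OF False a_pos ne, of l] by simp
    qed
    then show ?thesis unfolding z_def by auto
  qed
  define D where "D = a n - a (Suc n)"
  have Dpos: "D > 0" unfolding D_def using a_decr[of n "Suc n"] by simp
  have "summable (\<lambda>m. norm (z m))"
  proof (rule summable_comparison_test_ev)
    show "summable (\<lambda>m. (2 / D) * a m)" using asum by (rule summable_mult)
    show "\<forall>\<^sub>F m in sequentially. norm (norm (z m)) \<le> (2 / D) * a m"
      using la eventually_gt_at_top[of n]
    proof eventually_elim
      case (elim m)
      then have nm: "n < m" and lm: "norm (l m) \<le> a m" by auto
      have ane: "a n \<noteq> a m" "a n > 0" using a_decr[OF nm] a_pos[of n] by auto
      have "z m = (complex_of_real (a n) - l m) / complex_of_real (a n - a m) - 1"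
        using nm ane unfolding z_def k_factor_def by (simp add: frac_aux)
      also have "\<dots> = (complex_of_real (a m) - l m) / complex_of_real (a n - a m)"
        using ane by (simp add: field_simps)
      finally have zeq: "z m = (complex_of_real (a m) - l m) / complex_of_real (a n - a m)" .
      have "norm (z m) = norm (complex_of_real (a m) - l m) / (a n - a m)"
      proof -
        have "norm (complex_of_real (a n - a m)) = a n - a m" using a_decr[OF nm] by (simp only: norm_of_real)
        then show ?thesis unfolding zeq by (simp only: norm_divide)
      qed
      also have "\<dots> \<le> (2 * a m) / D"
      proof (rule frac_le)
        show "norm (complex_of_real (a m) - l m) \<le> 2 * a m"
          using norm_triangle_ineq4[of "complex_of_real (a m)" "l m"] lm a_pos[of m] by simp
        show "0 < D" by (rule Dpos)
        show "D \<le> a n - a m" unfolding D_def using a_decr[of "Suc n" m] nm by (cases "Suc n = m") auto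
      qed (use a_pos[of m] in auto)
      finally show ?case by simp
    qed
  qed
  then have "convergent_prod (\<lambda>m. 1 + z m)" using nz by (rule summable_imp_convergent_prod_complex)
  then show ?thesis unfolding z_def by simp
qed



lemma prod_sq_fact:
  "(\<Prod>m<J. (N / real (Suc m))^2) = (N ^ J / fact J)^2"
proof -
  have "(\<Prod>m<J. (N / real (Suc m))^2) = (\<Prod>m<J. N / real (Suc m))^2" by (simp add: prod_power_distrib)
  also have "(\<Prod>m<J. N / real (Suc m)) = N ^ J / (\<Prod>m<J. real (Suc m))" by (simp add: prod_dividef)
  also have "(\<Prod>m<J. real (Suc m)) = fact J" by (simp add: fact_prod_Suc lessThan_atLeast0)
  finally show ?thesis .
qed

lemma pow_fact_bound:
  assumes "T \<ge> 1" "real J \<le> N / T" "N \<ge> 0"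
  shows "N ^ J / fact J \<le> exp (N / T * (ln T + 1))"
proof -
  have T0: "T > 0" using assms by simp
  have "N ^ J / fact J = T ^ J * ((N / T) ^ J / fact J)" using T0 by (simp add: power_divide)
  also have "\<dots> \<le> T ^ J * exp (N / T)"
    using assms T0 by (intro mult_left_mono pow_fact_exp) auto
  also have "T ^ J = exp (real J * ln T)" using T0 by (simp add: exp_of_nat_mult)
  also have "\<dots> \<le> exp (N / T * ln T)" using assms by (intro exp_mono mult_right_mono) auto
  finally have "N ^ J / fact J \<le> exp (N / T * ln T) * exp (N / T)" by (simp add: mult_right_mono)
  also have "\<dots> = exp (N / T * (ln T + 1))" by (simp add: exp_add[symmetric] algebra_simps)
  finally show ?thesis .
qed

lemma eta_pow_bound:
  assumes "0 < \<eta>" "\<eta> \<le> 1" "real J \<ge> x" "K \<le> J"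
  shows "\<eta> ^ (J - K) \<le> exp (- real K * ln \<eta>) * exp (x * ln \<eta>)"
proof -
  have "\<eta> ^ (J - K) = exp (ln \<eta>) ^ (J - K)" using assms by simp
  also have "\<dots> = exp (real (J - K) * ln \<eta>)" by (simp add: exp_of_nat_mult)
  also have "real (J - K) = real J - real K" using assms by (simp add: of_nat_diff)
  also have "(real J - real K) * ln \<eta> \<le> (x - real K) * ln \<eta>"
    using assms by (intro mult_right_mono_neg) auto
  then have "exp ((real J - real K) * ln \<eta>) \<le> exp ((x - real K) * ln \<eta>)" by simp
  also have "\<dots> = exp (- real K * ln \<eta>) * exp (x * ln \<eta>)" by (simp add: exp_add[symmetric] algebra_simps)
  finally show ?thesis .
qed

lemma onep_pow_bound:
  assumes "c \<ge> 0" "j \<le> n"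
  shows "(1 + c) ^ j \<le> exp (c * real (Suc n))"
proof -
  have "(1 + c) ^ j \<le> exp c ^ j" using assms by (intro power_mono) (auto intro: exp_ge_add_one_self)
  also have "\<dots> = exp (c * real j)" by (simp add: exp_of_nat2_mult)
  also have "\<dots> \<le> exp (c * real (Suc n))" using assms by (intro exp_mono mult_left_mono) auto
  finally show ?thesis .
qed



lemma part2:
  fixes a :: "nat \<Rightarrow> real" and l b :: "nat \<Rightarrow> complex"
  assumes a_decr: "\<And>m n. m < n \<Longrightarrow> a n < a m" and a_pos: "\<And>n. 0 < a n"
    and d: "d > 2"
    and N0: "\<And>i j. N0 \<le> i \<Longrightarrow> i \<le> j \<Longrightarrow> real (Suc j) powr d * a j \<le> real (Suc i) powr d * a i"
    and lo: "(\<lambda>n. ln (a n / cmod (b n))) \<in> o(\<lambda>n. real (Suc n))"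
    and l0: "l \<longlonglongrightarrow> 0" and l: "\<And>m. Re (l m) \<le> 0"
    and la: "(\<lambda>n. l n / complex_of_real (a n)) \<longlonglongrightarrow> 0"
    and b_nz: "\<And>n. b n \<noteq> 0"
  shows "k_well_defined a l \<and> summable (\<lambda>n. norm (k a b l n))"
proof -
  have la_bound: "\<exists>K. \<forall>m\<ge>K. norm (l m) \<le> e * a m" if e: "e > 0" for e :: real
  proof -
    from la[unfolded LIMSEQ_iff] e obtain K where K: "\<forall>m\<ge>K. norm (l m / complex_of_real (a m) - 0) < e" by blast
    have "norm (l m) \<le> e * a m" if "m \<ge> K" for m
    proof -
      have "norm (l m) / \<bar>a m\<bar> < e" using K that by (simp add: norm_divide)
      then have "norm (l m) / a m < e" using a_pos[of m] by simp
      then show ?thesis using a_pos[of m] by (simp add: divide_less_eq less_imp_le)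
    qed
    then show ?thesis by blast
  qed
  have asum: "summable a" using a_summable[OF a_pos _ N0] d by simp
  have wd: "k_well_defined a l"
    unfolding k_well_defined_def
  proof
    fix n
    obtain K1 where "\<forall>m\<ge>K1. norm (l m) \<le> 1 * a m" using la_bound[of 1] by auto
    then have ev: "eventually (\<lambda>m. norm (l m) \<le> a m) sequentially" by (auto simp: eventually_at_top_linorder)
    show "convergent_prod (k_factor a l n)"
      apply (rule part2_conv)
      apply (rule a_decr, assumption)
      apply (rule a_pos)
      apply (rule asum)
      apply (rule l)
      apply (rule ev)
      done
  qed
  define T where "T = max 2 (exp ((ln 4 + 3) / (d - 2)))"
  have T2: "T \<ge> 2" by (simp add: T_def)
  have T0: "T > 0" using T2 by simp
  have lnT: "(d - 2) * ln T \<ge> ln 4 + 3"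
  proof -
    have "ln T \<ge> ln (exp ((ln 4 + 3)/(d-2)))" unfolding T_def by (subst ln_le_cancel_iff) auto
    then have "ln T \<ge> (ln 4 + 3)/(d-2)" by simp
    then show ?thesis using d by (simp add: field_simps)
  qed
  define Td where "Td = T powr d"
  have Td4: "Td \<ge> 4"
  proof -
    have "T powr d \<ge> T powr 2" using T2 d by (intro powr_mono) auto
    moreover have "T powr 2 = T^2" using T2 by (simp add: powr_numeral)
    moreover have "T^2 \<ge> 2^2" using T2 by (intro power_mono) auto
    ultimately show ?thesis unfolding Td_def by simp
  qed
  define \<epsilon> where "\<epsilon> = min (1 / Td) (1 / (4 * T * (T^2 + 1)))"
  have "T * (T^2 + 1) > 0" using T2 by (intro mult_pos_pos add_nonneg_pos) auto
  then have eps0: "\<epsilon> > 0" using Td4 T2 by (simp add: \<epsilon>_def)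
  have eps1: "\<epsilon> \<le> 1 / Td" "\<epsilon> \<le> 1 / (4 * T * (T^2 + 1))" by (simp_all add: \<epsilon>_def)
  have eps_le1: "\<epsilon> \<le> 1" using eps1(1) Td4 by (smt (verit) divide_le_eq_1)
  define \<eta> where "\<eta> = 2 / Td + 2 * \<epsilon>"
  have "2 / Td > 0" using Td4 by simp
  then have eta_pos: "\<eta> > 0" using eps0 unfolding \<eta>_def by linarith
  have eta_le: "\<eta> \<le> 4 / Td" using eps1 by (simp add: \<eta>_def)
  have eta1: "\<eta> \<le> 1" using eta_le Td4 by (smt (verit) divide_le_eq_1)
  define \<delta> where "\<delta> = 1 / (4 * T)"
  obtain K1 where K1: "\<forall>m\<ge>K1. norm (l m) \<le> \<epsilon> * a m" using la_bound eps0 by blast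
  define K where "K = max K1 N0"
  have lK: "\<And>m. K \<le> m \<Longrightarrow> norm (l m) \<le> \<epsilon> * a m" using K1 by (simp add: K_def)
  have KN0: "N0 \<le> K" by (simp add: K_def)
  obtain L where L: "\<And>m. norm (l m) \<le> L"
    using convergent_imp_Bseq[OF convergentI[OF l0]] unfolding Bseq_def by auto
  define C0 where "C0 = Max (insert 1 ((\<lambda>m. (a 0 + L) / (a m - a (Suc m))) ` {..<K}))"
  have C0: "\<And>m. m < K \<Longrightarrow> (a 0 + L) / (a m - a (Suc m)) \<le> C0" unfolding C0_def by (intro Max_ge) auto
  have C0pos: "C0 \<ge> 0"
  proof -
    have "1 \<le> C0" unfolding C0_def by (intro Max_ge) auto
    then show ?thesis by simp
  qed
  have "eventually (\<lambda>n. norm (ln (a n / cmod (b n))) \<le> \<delta> * norm (real (Suc n))) sequentially"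
  proof -
    have "\<delta> > 0" using T0 by (simp add: \<delta>_def)
    from landau_o.smallD[OF lo this] show ?thesis by simp
  qed
  then obtain Nb where Nb: "\<And>n. n \<ge> Nb \<Longrightarrow> \<bar>ln (a n / cmod (b n))\<bar> \<le> \<delta> * real (Suc n)"
    by (auto simp: eventually_at_top_linorder)
  define n2 where "n2 = max (max Nb K) (nat \<lceil>T * (real K + 1)\<rceil>)"
  define E where "E = \<delta> + ln \<eta> / T + 2 * (ln T + 1) / T + \<epsilon> * T^2 + \<epsilon>"
  define C3 where "C3 = 4 * C0 ^ K * exp (- real K * ln \<eta>) * exp (- ln \<eta>)"
  have C3pos: "C3 \<ge> 0" unfolding C3_def using C0pos by simp
  have main: "norm (k a b l n) \<le> C3 * exp (E * real (Suc n))" if n: "n \<ge> n2" for n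
  proof -
    define N where "N = real (Suc n)"
    define J where "J = nat \<lfloor>N / T\<rfloor>"
    have NT0: "N / T \<ge> 0" unfolding N_def using T0 by simp
    have fl: "real J \<le> N / T" "N / T < real J + 1"
      unfolding J_def using NT0 by (simp_all add: of_nat_nat floor_less_cancel)
    have J1: "real J * T \<le> N" using fl(1) T0 by (simp add: field_simps)
    have J2: "N < (real J + 1) * T" using fl(2) T0 by (simp add: field_simps)
    have nK: "real n \<ge> T * (real K + 1)" using n unfolding n2_def by linarith
    have KJ: "K \<le> J"
    proof -
      have "N / T \<ge> real K + 1" using nK T0 unfolding N_def by (simp add: field_simps)
      then show ?thesis using fl(2) by linarith
    qed
    have n1: "n \<ge> 1"
    proof -
      have "T * (real K + 1) \<ge> T * 1" using T2 by (intro mult_left_mono) auto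
      then have "real n \<ge> 2" using nK T2 by linarith
      then show ?thesis by simp
    qed
    have Jn: "J \<le> n"
    proof -
      have "N / T \<le> N / 2" using T2 unfolding N_def by (intro divide_left_mono) auto
      also have "N / 2 \<le> real n" using n1 unfolding N_def by simp
      finally show ?thesis using fl(1) by linarith
    qed
    have conv: "convergent_prod (k_factor a l n)" using wd unfolding k_well_defined_def by blast
    have P: "norm (prodinf (k_factor a l n)) \<le>
     2 * (C0 ^ K * \<eta> ^ (J - K) * (\<Prod>m<J. (N / real (Suc m))^2) *
          (1 + \<epsilon> * T^2) ^ (n - J) * exp (\<epsilon> * N))"
      unfolding N_def
      apply (rule part2_prod)
      apply (rule a_decr, assumption)
      apply (rule a_pos)
      apply (rule less_imp_le[OF d])
      apply (rule N0, assumption, assumption)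
      apply (rule lK, assumption)
      apply (rule less_imp_le[OF eps0])
      apply (rule L)
      apply (rule C0, assumption)
      apply (rule C0pos)
      apply (rule KN0)
      apply (rule KJ)
      apply (rule Jn)
      apply (rule T2)
      apply (rule J1[unfolded N_def])
      apply (rule J2[unfolded N_def])
      apply (simp add: \<eta>_def Td_def)
      apply (rule conv)
      done
    have e1: "\<eta> ^ (J - K) \<le> exp (- real K * ln \<eta>) * exp ((N / T - 1) * ln \<eta>)"
      using eta_pos eta1 KJ fl by (intro eta_pow_bound) auto
    have e2: "(\<Prod>m<J. (N / real (Suc m))^2) \<le> exp (N / T * (ln T + 1)) ^ 2"
      unfolding prod_sq_fact
      using T2 fl unfolding N_def by (intro power_mono pow_fact_bound) auto
    have e3: "(1 + \<epsilon> * T^2) ^ (n - J) \<le> exp (\<epsilon> * T^2 * N)"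
      unfolding N_def using eps0 by (intro onep_pow_bound) auto
    have Q: "C0 ^ K * \<eta> ^ (J - K) * (\<Prod>m<J. (N / real (Suc m))^2) * (1 + \<epsilon> * T^2) ^ (n - J) * exp (\<epsilon> * N)
       \<le> C0 ^ K * (exp (- real K * ln \<eta>) * exp ((N / T - 1) * ln \<eta>)) * exp (N / T * (ln T + 1)) ^ 2 * exp (\<epsilon> * T^2 * N) * exp (\<epsilon> * N)"
      using e1 e2 e3 C0pos eta_pos eps0
      by (intro mult_mono mult_nonneg_nonneg prod_nonneg zero_le_power) (auto simp: N_def)
    have A: "norm (complex_of_real (a n) - l n) / norm (b n) \<le> 2 * exp (\<delta> * N)"
    proof -
      have "norm (complex_of_real (a n) - l n) \<le> a n + norm (l n)"
        using norm_triangle_ineq4[of "complex_of_real (a n)" "l n"] a_pos[of n] by simp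
      also have "\<dots> \<le> 2 * a n"
      proof -
        have "K \<le> n" using n unfolding n2_def by simp
        then have "norm (l n) \<le> \<epsilon> * a n" by (rule lK)
        also have "\<dots> \<le> 1 * a n" using eps_le1 a_pos[of n] by (intro mult_right_mono) auto
        finally show ?thesis by simp
      qed
      finally have h1: "norm (complex_of_real (a n) - l n) / norm (b n) \<le> 2 * (a n / norm (b n))"
        using b_nz[of n] by (simp add: divide_right_mono)
      have "ln (a n / norm (b n)) \<le> \<delta> * N" using Nb[of n] n unfolding n2_def N_def by auto
      then have "a n / norm (b n) \<le> exp (\<delta> * N)"
      proof -
        have pos: "a n / norm (b n) > 0" using a_pos[of n] b_nz[of n] by simp
        have "a n / norm (b n) = exp (ln (a n / norm (b n)))" using pos by simp
        also have "\<dots> \<le> exp (\<delta> * N)" using \<open>ln (a n / norm (b n)) \<le> \<delta> * N\<close> by simp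
        finally show ?thesis .
      qed
      with h1 show ?thesis by linarith
    qed
    have "norm (k a b l n) = norm (complex_of_real (a n) - l n) / norm (b n) * norm (prodinf (k_factor a l n))"
      unfolding k_def by (simp add: norm_mult norm_divide)
    also have "\<dots> \<le> (2 * exp (\<delta> * N)) * (2 * (C0 ^ K * (exp (- real K * ln \<eta>) * exp ((N / T - 1) * ln \<eta>)) * exp (N / T * (ln T + 1)) ^ 2 * exp (\<epsilon> * T^2 * N) * exp (\<epsilon> * N)))"
      using A P Q by (intro mult_mono) auto
    also have "\<dots> = C3 * exp (E * N)"
    proof -
      have "exp (\<delta> * N) * (exp (- real K * ln \<eta>) * exp ((N / T - 1) * ln \<eta>)) * exp (N / T * (ln T + 1)) ^ 2 * exp (\<epsilon> * T^2 * N) * exp (\<epsilon> * N)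
         = exp (- real K * ln \<eta>) * exp (- ln \<eta>) * exp (E * N)"
      proof -
        define S where "S = \<delta> * N + - real K * ln \<eta> + (N / T - 1) * ln \<eta> + N / T * (ln T + 1) + N / T * (ln T + 1) + \<epsilon> * T^2 * N + \<epsilon> * N"
        have "exp (\<delta> * N) * (exp (- real K * ln \<eta>) * exp ((N / T - 1) * ln \<eta>)) * exp (N / T * (ln T + 1)) ^ 2 * exp (\<epsilon> * T^2 * N) * exp (\<epsilon> * N) = exp S"
          unfolding S_def by (simp only: exp_add power2_eq_square mult_ac)
        also have "S = - real K * ln \<eta> + - ln \<eta> + E * N"
          unfolding S_def E_def using T0 by (simp add: field_simps)
        also have "exp (- real K * ln \<eta> + - ln \<eta> + E * N) = exp (- real K * ln \<eta>) * exp (- ln \<eta>) * exp (E * N)"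
          by (simp only: exp_add)
        finally show ?thesis .
      qed
      then show ?thesis unfolding C3_def by (simp add: algebra_simps)
    qed
    finally show ?thesis unfolding N_def .
  qed
  have lneta: "ln \<eta> \<le> ln 4 - d * ln T"
  proof -
    have "ln \<eta> \<le> ln (4 / Td)" using eta_pos eta_le by (intro ln_mono) auto
    also have "\<dots> = ln 4 - ln Td" using Td4 by (simp add: ln_div)
    also have "ln Td = d * ln T" unfolding Td_def using T0 by (simp add: ln_powr)
    finally show ?thesis .
  qed
  have E_neg: "E \<le> - 1 / (2 * T)"
  proof -
    have h1: "ln \<eta> + 2 * ln T + 2 \<le> -1" using lneta lnT by (simp add: algebra_simps)
    have h2: "\<epsilon> * (T^2 + 1) \<le> 1 / (4 * T)"
    proof -
      have D: "4 * T * (T^2 + 1) > 0" using T0 by (intro mult_pos_pos add_nonneg_pos) auto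
      have "\<epsilon> * (4 * T * (T^2 + 1)) \<le> 1" using eps1(2) D by (simp add: le_divide_eq)
      then have "(\<epsilon> * (T^2 + 1)) * (4 * T) \<le> 1" by (simp add: algebra_simps)
      then show ?thesis using T0 by (simp add: le_divide_eq)
    qed
    have "E = \<delta> + (ln \<eta> + 2 * ln T + 2) / T + \<epsilon> * (T^2 + 1)"
      unfolding E_def using T0 by (simp add: field_simps)
    also have "(ln \<eta> + 2 * ln T + 2) / T \<le> -1 / T" using h1 T0 by (intro divide_right_mono) auto
    then have "\<delta> + (ln \<eta> + 2 * ln T + 2) / T + \<epsilon> * (T^2 + 1) \<le> 1 / (4 * T) + -1 / T + 1 / (4 * T)"
      using h2 unfolding \<delta>_def by linarith
    also have "1 / (4 * T) + -1 / T + 1 / (4 * T) = - 1 / (2 * T)" using T0 by (simp add: field_simps)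
    finally show ?thesis .
  qed
  define q where "q = exp (- 1 / (2 * T))"
  have q: "q > 0" "q < 1" unfolding q_def using T0 by auto
  have "summable (\<lambda>n. norm (k a b l n))"
  proof (rule summable_comparison_test_ev)
    show "summable (\<lambda>n. (C3 * q) * q ^ n)" using q by (intro summable_mult summable_geometric) auto
    show "\<forall>\<^sub>F n in sequentially. norm (norm (k a b l n)) \<le> (C3 * q) * q ^ n"
      using eventually_ge_at_top[of n2]
    proof eventually_elim
      case (elim n)
      have "norm (k a b l n) \<le> C3 * exp (E * real (Suc n))" using main[OF elim] .
      also have "\<dots> \<le> C3 * exp (- 1 / (2 * T) * real (Suc n))"
      proof -
        have "E * real (Suc n) \<le> - 1 / (2 * T) * real (Suc n)"
          using E_neg by (intro mult_right_mono) auto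
        then show ?thesis using C3pos by (intro mult_left_mono) auto
      qed
      also have "exp (- 1 / (2 * T) * real (Suc n)) = q ^ Suc n"
      proof -
        have "q ^ Suc n = exp (real (Suc n) * (- 1 / (2 * T)))" unfolding q_def by (rule exp_of_nat_mult[symmetric])
        then show ?thesis by (simp only: mult.commute)
      qed
      finally show ?case by simp
    qed
  qed
  with wd show ?thesis by simp
qed



theorem theorem3:
  fixes a :: "nat \<Rightarrow> real" and b :: "nat \<Rightarrow> complex" and X :: seq_space
  assumes a_decr: "\<And>m n. m < n \<Longrightarrow> a n < a m"
    and a_pos: "\<And>n. 0 < a n"
    and a_lim: "a \<longlonglongrightarrow> 0"
    and X_valid: "valid_space X"
    and b_in: "in_space X b"
    and b_nz: "\<And>n. b n \<noteq> 0"
  shows "((\<exists>d<2. eventually_incr (\<lambda>n. real (Suc n) powr d * a n)) \<longrightarrow>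
            \<not> (\<exists>l\<in>c_H. k_well_defined a l \<and> bounded (range (k a b l))))
       \<and> ((\<exists>d>2. eventually_decr (\<lambda>n. real (Suc n) powr d * a n)) \<and>
            (\<lambda>n. ln (a n / cmod (b n))) \<in> o(\<lambda>n. real (Suc n)) \<longrightarrow>
            (\<forall>l\<in>c_H. (\<lambda>n. l n / complex_of_real (a n)) \<longlonglongrightarrow> 0 \<longrightarrow>
               k_well_defined a l \<and> summable (\<lambda>n. norm (k a b l n))))"
proof (rule conjI)
  show "(\<exists>d<2. eventually_incr (\<lambda>n. real (Suc n) powr d * a n)) \<longrightarrow>
            \<not> (\<exists>l\<in>c_H. k_well_defined a l \<and> bounded (range (k a b l)))"
  proof (intro impI notI)
  assume "\<exists>d<2. eventually_incr (\<lambda>n. real (Suc n) powr d * a n)"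
  then obtain d N0 where d: "d < 2" and N0: "\<And>i j. N0 \<le> i \<Longrightarrow> i \<le> j \<Longrightarrow> real (Suc i) powr d * a i \<le> real (Suc j) powr d * a j"
    unfolding eventually_incr_def by blast
  assume "\<exists>l\<in>c_H. k_well_defined a l \<and> bounded (range (k a b l))"
  then obtain l where lH: "l \<in> c_H" and wd: "k_well_defined a l" and bd: "bounded (range (k a b l))" by blast
  have l: "\<And>m. Re (l m) \<le> 0" using lH by (simp add: c_H_def)
  obtain B where B: "\<And>n. norm (b n) \<le> B" using in_space_bounded[OF b_in X_valid] by blast
  obtain Kb where Kb: "\<And>n. norm (k a b l n) \<le> Kb" using bd unfolding bounded_iff by blast
  show False by (rule part1[OF a_decr a_pos d N0 l wd B b_nz Kb])
  qed
  show "(\<exists>d>2. eventually_decr (\<lambda>n. real (Suc n) powr d * a n)) \<and>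
            (\<lambda>n. ln (a n / cmod (b n))) \<in> o(\<lambda>n. real (Suc n)) \<longrightarrow>
            (\<forall>l\<in>c_H. (\<lambda>n. l n / complex_of_real (a n)) \<longlonglongrightarrow> 0 \<longrightarrow>
               k_well_defined a l \<and> summable (\<lambda>n. norm (k a b l n)))"
  proof (intro impI ballI)
  fix l
  assume H: "(\<exists>d>2. eventually_decr (\<lambda>n. real (Suc n) powr d * a n)) \<and>
            (\<lambda>n. ln (a n / cmod (b n))) \<in> o(\<lambda>n. real (Suc n))"
    and lH: "l \<in> c_H" and la: "(\<lambda>n. l n / complex_of_real (a n)) \<longlonglongrightarrow> 0"
  obtain d N0 where d: "d > 2" and N0: "\<And>i j. N0 \<le> i \<Longrightarrow> i \<le> j \<Longrightarrow> real (Suc j) powr d * a j \<le> real (Suc i) powr d * a i"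
    using H unfolding eventually_decr_def by blast
  have lo: "(\<lambda>n. ln (a n / cmod (b n))) \<in> o(\<lambda>n. real (Suc n))" using H by blast
  have l0: "l \<longlonglongrightarrow> 0" and l: "\<And>m. Re (l m) \<le> 0" using lH by (simp_all add: c_H_def)
  show "k_well_defined a l \<and> summable (\<lambda>n. norm (k a b l n))"
    by (rule part2[OF a_decr a_pos d N0 lo l0 l la b_nz])
  qed
qed

end
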